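(* Let $n\ge 1$ and let $h\in\mathrm{PR}\cap\mathscr{A}_0$. Then for any $p_1,\ldots,p_n\in\mathcal{P}_h$ and any $L\in\mathcal{L}$, the feedback interconnection $$y_i(s)=p_i(s)\big(e_i(s)-u_i(s)\big),\ i=1,\dots,n,\qquad u(s)=\tfrac{1}{s}L\,y(s)$$ is stable, i.e. $$\begin{bmatrix}P(s)\\ I\end{bmatrix}\Big(I+\tfrac{1}{s}L P(s)\Big)^{-1}\begin{bmatrix}\tfrac{1}{s}L & I\end{bmatrix}\in\mathscr{H}_\infty^{2n\times 2n},\qquad P(s)=\operatorname{diag}(p_1(s),\dots,p_n(s)).$$
   Context: $\mathscr{H}_\infty$ denotes the space of (scalar or matrix) functions analytic and bounded on the open right half plane $\mathbb{C}_+=\{s:\mathrm{Re}(s)>0\}$, with norm $\|g\|_\infty=\sup_{s\in\mathbb{C}_+}|g(s)|$. $\mathscr{A}_0$ denotes the subset of $\mathscr{H}_\infty$ consisting of functions that extend continuously to the extended imaginary axis $j\mathbb{R}\cup\{\infty\}$. A (not necessarily proper or rational) transfer function $g$ is positive real ($g\in\mathrm{PR}$) if (i) $g$ is analytic in $\mathrm{Re}(s)>0$; (ii) $g(s)$ is real for all positive real $s$; (iii) $\mathrm{Re}(g(s))\ge 0$ for all $\mathrm{Re}(s)>0$. $g$ is extended strictly positive real ($g\in\mathrm{ESPR}$) if in addition $g\in\mathscr{A}_0$ and there exists $\epsilon>0$ such that $g(s)-\epsilon$ is PR. For $h$ given, $\mathcal{P}_h:=\{p\in\mathscr{H}_\infty:\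 p(0)\neq 0,\ h(s)(1+p(s)/s)\in\mathrm{ESPR}\}$ (here $p(0)$ denotes the boundary value at $s=0$). $\mathcal{L}:=\{L\in\mathbb{R}^{n\times n}: L=L^T,\ 0\preceq L\preceq I\}$. *)

theory Defs
  imports "HOL-Analysis.Analysis"
begin

definition RHP :: "complex set" where
  "RHP = {s. Re s > 0}"

definition Hinf :: "(complex \<Rightarrow> complex) \<Rightarrow> bool" where
  "Hinf g \<longleftrightarrow> g holomorphic_on RHP \<and> bounded (g ` RHP)"

definition Hinf_mat :: "(complex \<Rightarrow> complex^'m^'k) \<Rightarrow> bool" where
  "Hinf_mat G \<longleftrightarrow> (\<forall>i j. Hinf (\<lambda>s. G s $ i $ j))"

text \<open>A0: H-infinity functions extending continuously to the extended imaginary axis.\<close>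
definition A0 :: "(complex \<Rightarrow> complex) \<Rightarrow> bool" where
  "A0 g \<longleftrightarrow> Hinf g \<and>
     (\<exists>g'. continuous_on {s. Re s \<ge> 0} g' \<and> (\<forall>s\<in>RHP. g' s = g s) \<and>
           (\<exists>l. (g' \<longlongrightarrow> l) (inf at_infinity (principal {s. Re s \<ge> 0}))))"

definition PR :: "(complex \<Rightarrow> complex) \<Rightarrow> bool" where
  "PR g \<longleftrightarrow> g holomorphic_on RHP \<and>
     (\<forall>x::real. x > 0 \<longrightarrow> g (complex_of_real x) \<in> \<real>) \<and>
     (\<forall>s\<in>RHP. Re (g s) \<ge> 0)"

definition ESPR :: "(complex \<Rightarrow> complex) \<Rightarrow> bool" where
  "ESPR g \<longleftrightarrow> PR g \<and> A0 g \<and> (\<exists>\<epsilon>>0. PR (\<lambda>s. g s - complex_of_real \<epsilon>))"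

text \<open>The class P_h; p(0) is the boundary value at 0, i.e. the limit of p(s) as s tends to 0
  within the open right half plane (required to exist and be nonzero).\<close>
definition Pclass :: "(complex \<Rightarrow> complex) \<Rightarrow> (complex \<Rightarrow> complex) \<Rightarrow> bool" where
  "Pclass h p \<longleftrightarrow> Hinf p \<and>
     (\<exists>c. c \<noteq> 0 \<and> (p \<longlongrightarrow> c) (at 0 within RHP)) \<and>
     ESPR (\<lambda>s. h s * (1 + p s / s))"

definition Lset :: "(real^'n^'n) set" where
  "Lset = {L. transpose L = L \<and>
              (\<forall>x. 0 \<le> x \<bullet> (L *v x) \<and> x \<bullet> (L *v x) \<le> x \<bullet> x)}"

definition diagP :: "('n \<Rightarrow> complex \<Rightarrow> complex) \<Rightarrow> complex \<Rightarrow> complex^'n^'n" where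
  "diagP p s = (\<chi> i j. if i = j then p i s else 0)"

definition Lc_over_s :: "real^'n^'n \<Rightarrow> complex \<Rightarrow> complex^'n^'n" where
  "Lc_over_s L s = (\<chi> i j. complex_of_real (L $ i $ j) / s)"

definition retdiff :: "real^'n^'n \<Rightarrow> ('n \<Rightarrow> complex \<Rightarrow> complex) \<Rightarrow> complex \<Rightarrow> complex^'n^'n" where
  "retdiff L p s = mat 1 + Lc_over_s L s ** diagP p s"

text \<open>Closed-loop map [P; I] (I + (1/s) L P)^{-1} [(1/s) L, I], a 2n x 2n matrix
  indexed by 'n + 'n (Inl = first block, Inr = second block).\<close>
definition closed_loop :: "real^'n^'n \<Rightarrow> ('n \<Rightarrow> complex \<Rightarrow> complex) \<Rightarrow> complex \<Rightarrow> complex^('n+'n)^('n+'n)" where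
  "closed_loop L p s =
     (\<chi> k j. case k of Inl i \<Rightarrow> diagP p s $ i $ j | Inr i \<Rightarrow> (mat 1 :: complex^'n^'n) $ i $ j)
     ** matrix_inv (retdiff L p s)
     ** (\<chi> i k. case k of Inl j \<Rightarrow> Lc_over_s L s $ i $ j | Inr j \<Rightarrow> (mat 1 :: complex^'n^'n) $ i $ j)"

end

theory Submission imports Defs begin

lemma psd_cs:
  fixes L :: "real^'n^'n"
  assumes sym: "transpose L = L" and psd: "\<And>x. 0 \<le> x \<bullet> (L *v x)"
  shows "(x \<bullet> (L *v z))^2 \<le> (x \<bullet> (L *v x)) * (z \<bullet> (L *v z))"
proof -
  have symm: "\<And>u v. u \<bullet> (L *v v) = v \<bullet> (L *v u)"
    by (metis dot_lmul_matrix inner_commute sym vector_transpose_matrix)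
  let ?A = "x \<bullet> (L *v x)" and ?B = "x \<bullet> (L *v z)" and ?C = "z \<bullet> (L *v z)"
  have q: "0 \<le> ?A + 2*t*?B + t^2 * ?C" for t :: real
  proof -
    have "0 \<le> (x + t *\<^sub>R z) \<bullet> (L *v (x + t *\<^sub>R z))" by (rule psd)
    also have "\<dots> = ?A + 2*t*?B + t^2 * ?C"
      using symm[of z x]
      by (simp add: matrix_vector_right_distrib inner_add_left inner_add_right
          matrix_vector_mult_scaleR algebra_simps power2_eq_square)
    finally show ?thesis .
  qed
  show ?thesis
  proof (cases "?C = 0")
    case True
    have "?B = 0"
    proof (rule ccontr)
      assume nz: "?B \<noteq> 0"
      have "0 \<le> ?A + 2*(-(?A+1)/(2*?B))*?B" using q[of "-(?A+1)/(2*?B)"] True by simp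
      also have "\<dots> = -1" using nz by (simp add: field_simps)
      finally show False by simp
    qed
    then show ?thesis using True by simp
  next
    case False
    have Cpos: "?C > 0" using psd[of z] False by linarith
    have "0 \<le> ?A + 2*(-?B/?C)*?B + (-?B/?C)^2 * ?C" using q[of "-?B/?C"] .
    also have "\<dots> = ?A - ?B^2/?C" using Cpos by (simp add: field_simps power2_eq_square)
    finally have "?B^2/?C \<le> ?A" by simp
    then show ?thesis using Cpos by (simp add: field_simps mult.commute)
  qed
qed

lemma contr_sq:
  fixes L :: "real^'n^'n"
  assumes "L \<in> Lset"
  shows "(L *v u) \<bullet> (L *v u) \<le> u \<bullet> (L *v u)"
proof -
  have sym: "transpose L = L" and psd: "\<And>x. 0 \<le> x \<bullet> (L *v x)" and le1: "\<And>x. x \<bullet> (L *v x) \<le> x \<bullet> x"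
    using assms by (auto simp: Lset_def)
  have symm: "\<And>u v. u \<bullet> (L *v v) = v \<bullet> (L *v u)"
    by (metis dot_lmul_matrix inner_commute sym vector_transpose_matrix)
  let ?z = "L *v u"
  have "(u \<bullet> (L *v ?z))^2 \<le> (u \<bullet> (L *v u)) * (?z \<bullet> (L *v ?z))"
    by (rule psd_cs[OF sym psd])
  moreover have "u \<bullet> (L *v ?z) = ?z \<bullet> ?z" using symm[of u ?z] by (simp add: dot_lmul_matrix inner_commute)
  ultimately have 1: "(?z \<bullet> ?z)^2 \<le> (u \<bullet> (L *v u)) * (?z \<bullet> (L *v ?z))" by simp
  have 2: "(u \<bullet> (L *v u)) * (?z \<bullet> (L *v ?z)) \<le> (u \<bullet> (L *v u)) * (?z \<bullet> ?z)"
    by (rule mult_left_mono[OF le1 psd])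
  from 1 2 have 3: "(?z \<bullet> ?z)^2 \<le> (u \<bullet> (L *v u)) * (?z \<bullet> ?z)" by linarith
  show ?thesis
  proof (cases "?z \<bullet> ?z = 0")
    case True then show ?thesis using psd[of u] by simp
  next
    case False
    then have "?z \<bullet> ?z > 0" by (simp add: inner_gt_zero_iff)
    with 3 show ?thesis by (simp add: power2_eq_square)
  qed
qed

definition cip :: "complex^'n \<Rightarrow> complex^'n \<Rightarrow> complex" where
  "cip u v = (\<Sum>i\<in>UNIV. cnj (u$i) * v$i)"

lemma norm_sq_vec: "(norm (x::complex^'n))^2 = (\<Sum>i\<in>UNIV. (cmod (x$i))^2)"
  by (simp add: norm_vec_def L2_set_def sum_nonneg)

lemma sum_mod_le: "(\<Sum>i\<in>UNIV. cmod (u$i) * cmod (v$i)) \<le> norm (u::complex^'n) * norm v"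
  using L2_set_mult_ineq[of "\<lambda>i. cmod (u$i)" "\<lambda>i. cmod (v$i)" UNIV]
  by (simp add: norm_vec_def)

lemma cip_le: "cmod (cip u v) \<le> (\<Sum>i\<in>UNIV. cmod (u$i) * cmod (v$i))"
  unfolding cip_def
  by (rule order_trans[OF norm_sum]) (simp add: norm_mult)

lemma cip_bound: "cmod (cip u v) \<le> norm u * norm v"
  using cip_le sum_mod_le order_trans by blast

lemma Q_lemma:
  fixes L :: "real^'n^'n" and w :: "complex^'n"
  assumes LL: "L \<in> Lset"
  defines "z \<equiv> (\<chi> i. \<Sum>j\<in>UNIV. complex_of_real (L$i$j) * w$j)"
  shows "Im (cip z z - cip z w) = 0 \<and> Re (cip z z - cip z w) \<le> 0"
proof -
  have sym: "transpose L = L" using LL by (simp add: Lset_def)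
  have symm: "\<And>u v. u \<bullet> (L *v v) = v \<bullet> (L *v u)"
    by (metis dot_lmul_matrix inner_commute sym vector_transpose_matrix)
  define u where "u = (\<chi> i. Re (w$i))"
  define v where "v = (\<chi> i. Im (w$i))"
  have Rz: "Re (z$i) = (L *v u)$i" for i
    by (simp add: z_def u_def matrix_vector_mult_def Re_sum)
  have Iz: "Im (z$i) = (L *v v)$i" for i
    by (simp add: z_def v_def matrix_vector_mult_def Im_sum)
  have czz: "cip z z = complex_of_real ((L *v u) \<bullet> (L *v u) + (L *v v) \<bullet> (L *v v))"
    unfolding cip_def inner_vec_def
    by (simp add: complex_eq_iff Re_sum Im_sum Rz Iz sum.distrib power2_eq_square)
  have Rzw: "Re (cip z w) = (L *v u) \<bullet> u + (L *v v) \<bullet> v"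
    unfolding cip_def inner_vec_def
    by (simp add: Re_sum Rz Iz sum.distrib u_def v_def)
  have Izw: "Im (cip z w) = (L *v u) \<bullet> v - (L *v v) \<bullet> u"
    unfolding cip_def inner_vec_def
    by (simp add: Im_sum Rz Iz sum_subtractf u_def v_def algebra_simps)
  have "(L *v u) \<bullet> v = (L *v v) \<bullet> u" using symm[of v u] by (simp add: inner_commute)
  then have I0: "Im (cip z w) = 0" using Izw by simp
  have "(L *v u) \<bullet> (L *v u) \<le> (L *v u) \<bullet> u" using contr_sq[OF LL, of u] by (simp add: inner_commute)
  moreover have "(L *v v) \<bullet> (L *v v) \<le> (L *v v) \<bullet> v" using contr_sq[OF LL, of v] by (simp add: inner_commute)
  ultimately show ?thesis using czz Rzw I0 by simp
qed

lemma final_arith: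
  fixes X T C e :: real
  assumes "e > 0" "C \<ge> 0" "X \<ge> 0" "T \<ge> 0" "e * X^2 \<le> C * (X + T) * T"
  shows "X \<le> (1 + 2*C/e) * T"
proof (cases "X \<le> T")
  case True
  have "0 \<le> 2*C/e * T" using assms by simp
  then show ?thesis using True by (simp add: algebra_simps)
next
  case False
  then have "C * (X + T) * T \<le> C * (2*X) * T"
    using assms by (intro mult_right_mono mult_left_mono) auto
  with assms(5) have "e * X^2 \<le> 2*C*T * X" by (simp add: algebra_simps)
  then have "e * X \<le> 2*C*T" using False assms by (simp add: power2_eq_square)
  then have "X \<le> 2*C*T/e" using assms by (simp add: field_simps)
  moreover have "2*C*T/e \<le> (1 + 2*C/e) * T" using assms by (simp add: field_simps)
  ultimately show ?thesis by linarith
qed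

lemma core:
  fixes L :: "real^'n^'n" and x a b :: "complex^'n" and pv :: "'n \<Rightarrow> complex" and hs s :: complex
  assumes LL: "L \<in> Lset" and s0: "Re s > 0"
    and Mb: "cmod hs \<le> M" and Hb: "cmod (hs/s) \<le> H" and Kb: "\<And>i. cmod (pv i) \<le> K"
    and eb: "\<And>i. Re (hs * (1 + pv i / s)) \<ge> e" and e0: "e > 0" and hpos: "Re hs \<ge> 0"
    and eq: "\<And>i. x$i = b$i + (\<Sum>j\<in>UNIV. complex_of_real (L$i$j) * (a$j - pv j * x$j)) / s"
  shows "norm x \<le> (1 + 2*(2*M + H*K + H)/e) * (norm a + norm b)"
proof -
  have snz: "s \<noteq> 0" using s0 by auto
  define y where "y = (\<chi> i. pv i * x$i)"
  define w where "w = a - y"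
  define z where "z = (\<chi> i. \<Sum>j\<in>UNIV. complex_of_real (L$i$j) * w$j)"
  define d where "d = x - b"
  have zd: "z$i = s * d$i" for i
    using eq[of i] snz by (simp add: z_def d_def w_def y_def field_simps)
  have pt: "hs * (1 + pv i / s) * (cnj (x$i) * x$i) =
      hs * (cnj (x$i) * b$i) + hs * (cnj (b$i) * d$i) + (hs/s) * (cnj (b$i) * y$i)
      + (hs/s) * (cnj (d$i) * a$i) + hs * (cnj (z$i) * z$i - cnj (z$i) * w$i) / (s * cnj s)" for i
  proof -
    have xi: "x$i = b$i + d$i" by (simp add: d_def)
    have yi: "pv i * x$i = y$i" by (simp add: y_def)
    have wi: "w$i = a$i - y$i" by (simp add: w_def)
    have cs: "cnj s \<noteq> 0" using snz by simp
    show ?thesis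
      unfolding zd wi yi[symmetric] xi
      using snz cs
      by (simp add: field_simps)
  qed
  define Q where "Q = cip z z - cip z w"
  have ident: "(\<Sum>i\<in>UNIV. hs * (1 + pv i / s) * (cnj (x$i) * x$i)) =
      hs * cip x b + hs * cip b d + (hs/s) * cip b y + (hs/s) * cip d a + hs * Q / (s * cnj s)"
    unfolding pt Q_def cip_def sum.distrib
    by (simp add: sum_distrib_left[symmetric] sum_divide_distrib[symmetric] sum_subtractf[symmetric]
         right_diff_distrib[symmetric])
  have lhs: "e * (norm x)^2 \<le> Re (\<Sum>i\<in>UNIV. hs * (1 + pv i / s) * (cnj (x$i) * x$i))"
  proof -
    have re_pt: "Re (hs * (1 + pv i / s) * (cnj (x$i) * x$i)) = Re (hs * (1 + pv i / s)) * (cmod (x$i))^2" for i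
    proof -
      have "cnj (x$i) * x$i = complex_of_real ((cmod (x$i))^2)"
        by (simp add: complex_norm_square[symmetric] mult.commute)
      then show ?thesis by simp
    qed
    then have "Re (\<Sum>i\<in>UNIV. hs * (1 + pv i / s) * (cnj (x$i) * x$i))
        = (\<Sum>i\<in>UNIV. Re (hs * (1 + pv i / s)) * (cmod (x$i))^2)"
      by (simp only: Re_sum re_pt)
    moreover have "(\<Sum>i\<in>UNIV. e * (cmod (x$i))^2) \<le> (\<Sum>i\<in>UNIV. Re (hs * (1 + pv i / s)) * (cmod (x$i))^2)"
      by (intro sum_mono mult_right_mono eb) simp
    ultimately show ?thesis by (simp add: norm_sq_vec sum_distrib_left)
  qed
  have Qp: "Im Q = 0 \<and> Re Q \<le> 0" unfolding Q_def z_def by (rule Q_lemma[OF LL])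
  have lastterm: "Re (hs * Q / (s * cnj s)) \<le> 0"
  proof -
    have "s * cnj s = complex_of_real ((cmod s)^2)" by (simp add: complex_norm_square[symmetric])
    moreover have "Q = complex_of_real (Re Q)" using Qp by (simp add: complex_eq_iff)
    ultimately have "hs * Q / (s * cnj s) = complex_of_real (Re Q / (cmod s)^2) * hs"
      by (metis (no_types, lifting) mult.commute of_real_divide times_divide_eq_right)
    then have "Re (hs * Q / (s * cnj s)) = Re Q / (cmod s)^2 * Re hs" by simp
    also have "\<dots> \<le> 0" using Qp hpos by (simp add: divide_nonpos_nonneg mult_nonpos_nonneg)
    finally show ?thesis .
  qed
  have M0: "M \<ge> 0" using Mb norm_ge_zero order_trans by blast
  have H0: "H \<ge> 0" using Hb norm_ge_zero order_trans by blast
  have K0: "K \<ge> 0" using Kb norm_ge_zero order_trans by blast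
  have nd: "norm d \<le> norm x + norm b" unfolding d_def by (rule norm_triangle_ineq4)
  have ny: "cmod (cip b y) \<le> K * (norm b * norm x)"
  proof -
    have "cmod (cip b y) \<le> (\<Sum>i\<in>UNIV. cmod (b$i) * cmod (y$i))" by (rule cip_le)
    also have "\<dots> \<le> (\<Sum>i\<in>UNIV. K * (cmod (b$i) * cmod (x$i)))"
      by (intro sum_mono) (simp add: y_def norm_mult mult_left_mono mult_right_mono Kb algebra_simps
            mult.left_commute[of "cmod (b$_)"])
    also have "\<dots> \<le> K * (norm b * norm x)"
      by (simp add: sum_distrib_left[symmetric] mult_left_mono[OF sum_mod_le K0])
    finally show ?thesis .
  qed
  let ?X = "norm x" and ?A = "norm a" and ?B = "norm b" and ?D = "norm d"
  have t1: "cmod (hs * cip x b) \<le> M * (?X * ?B)"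
    by (simp add: norm_mult mult_mono[OF Mb cip_bound] M0)
  have t2: "cmod (hs * cip b d) \<le> M * (?B * ?D)"
    by (simp add: norm_mult mult_mono[OF Mb cip_bound] M0)
  have t3: "cmod ((hs/s) * cip b y) \<le> H * (K * (?B * ?X))"
    by (simp only: norm_mult, rule mult_mono[OF Hb ny H0 norm_ge_zero])
  have t4: "cmod ((hs/s) * cip d a) \<le> H * (?D * ?A)"
    by (simp only: norm_mult, rule mult_mono[OF Hb cip_bound H0 norm_ge_zero])
  have "e * ?X^2 \<le> Re (hs * cip x b + hs * cip b d + (hs/s) * cip b y + (hs/s) * cip d a) + Re (hs * Q / (s * cnj s))"
    using lhs ident by simp
  also have "\<dots> \<le> cmod (hs * cip x b) + cmod (hs * cip b d) + cmod ((hs/s) * cip b y) + cmod ((hs/s) * cip d a)"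
    using lastterm complex_Re_le_cmod[of "hs * cip x b"] complex_Re_le_cmod[of "hs * cip b d"]
      complex_Re_le_cmod[of "(hs/s) * cip b y"] complex_Re_le_cmod[of "(hs/s) * cip d a"]
    by (simp only: plus_complex.sel)
  also have "\<dots> \<le> M * (?X * ?B) + M * (?B * ?D) + H * (K * (?B * ?X)) + H * (?D * ?A)"
    using t1 t2 t3 t4 by linarith
  also have "\<dots> \<le> (2*M + H*K + H) * (?X + ?B) * (?A + ?B)"
  proof -
    have "M * (?X * ?B) \<le> M * ((?X + ?B) * (?A + ?B))" by (intro mult_left_mono M0) (simp add: algebra_simps add_nonneg_nonneg)
    moreover have "M * (?B * ?D) \<le> M * ((?X + ?B) * (?A + ?B))"
    proof -
      have "?B * ?D \<le> (?A + ?B) * (?X + ?B)" by (rule mult_mono[OF _ nd]) auto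
      then show ?thesis by (intro mult_left_mono M0) (simp add: mult.commute)
    qed
    moreover have "H * (K * (?B * ?X)) \<le> H * K * ((?X + ?B) * (?A + ?B))"
      unfolding mult.assoc by (intro mult_left_mono H0 K0) (simp add: algebra_simps add_nonneg_nonneg)
    moreover have "H * (?D * ?A) \<le> H * ((?X + ?B) * (?A + ?B))"
      by (intro mult_left_mono H0 mult_mono nd) auto
    ultimately show ?thesis by (simp add: algebra_simps)
  qed
  also have "\<dots> \<le> (2*M + H*K + H) * (?X + (?A + ?B)) * (?A + ?B)"
  proof -
    have C0: "0 \<le> 2*M + H*K + H" using M0 H0 K0 by simp
    have "(2*M + H*K + H) * (?X + ?B) \<le> (2*M + H*K + H) * (?X + (?A + ?B))"
      by (rule mult_left_mono[OF _ C0]) simp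
    then show ?thesis by (rule mult_right_mono) simp
  qed
  finally have "e * ?X^2 \<le> (2*M + H*K + H) * (?X + (?A + ?B)) * (?A + ?B)" .
  then show ?thesis
    by (intro final_arith e0) (auto simp: M0 H0 K0)
qed

lemma Rv: "(retdiff L p s *v x)$i = x$i + (\<Sum>j\<in>UNIV. complex_of_real (L$i$j) * (p j s * x$j)) / s"
proof -
  have "(retdiff L p s *v x) = x + Lc_over_s L s *v (diagP p s *v x)"
    by (simp add: retdiff_def matrix_vector_mult_add_rdistrib matrix_vector_mul_assoc)
  moreover have "(diagP p s *v x)$j = p j s * x$j" for j
  proof -
    have e: "\<And>k. (if j = k then p j s else 0) * x$k = (if j = k then p j s * x$k else 0)" by simp
    show ?thesis by (simp add: diagP_def matrix_vector_mult_def e)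
  qed
  ultimately show ?thesis
    by (simp add: matrix_vector_mult_def Lc_over_s_def sum_divide_distrib)
qed

lemma R_entry: "retdiff L p s $ i $ j = (if i = j then 1 else 0) + complex_of_real (L$i$j) / s * p j s"
  by (simp add: retdiff_def matrix_matrix_mult_def mat_def Lc_over_s_def diagP_def if_distrib cong: if_cong)

lemma det_holo:
  fixes F :: "complex \<Rightarrow> complex^'n^'n"
  assumes "\<And>i j. (\<lambda>s. F s $ i $ j) holomorphic_on S"
  shows "(\<lambda>s. det (F s)) holomorphic_on S"
  unfolding det_def
  by (intro holomorphic_on_sum holomorphic_on_prod holomorphic_on_mult holomorphic_on_const assms)

lemma R_holo:
  assumes "\<And>j. p j holomorphic_on RHP"
  shows "(\<lambda>s. retdiff L p s $ i $ j) holomorphic_on RHP"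
proof -
  have "(\<lambda>s. (if i = j then 1 else 0) + complex_of_real (L$i$j) / s * p j s) holomorphic_on RHP"
    by (intro holomorphic_intros assms) (auto simp: RHP_def)
  then show ?thesis unfolding R_entry .
qed


lemma norm_axis_c: "norm (axis j (1::complex)) = 1"
proof -
  have "(\<Sum>i\<in>UNIV. (cmod (axis j (1::complex) $ i))^2) = (\<Sum>i\<in>UNIV. if i = j then 1 else 0)"
    by (rule sum.cong) (auto simp: axis_def)
  then have "(norm (axis j (1::complex)))^2 = 1" by (simp add: norm_sq_vec)
  then show ?thesis by (simp add: power2_eq_1_iff)
qed

lemma const_bounds:
  fixes h :: "complex \<Rightarrow> complex"
    and p :: "'n::finite \<Rightarrow> complex \<Rightarrow> complex"
  assumes "PR h" and "A0 h"
    and "\<forall>i. Pclass h (p i)"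
  shows "\<exists>M H K e. e > 0 \<and> (\<forall>s\<in>RHP. cmod (h s) \<le> M \<and> cmod (h s / s) \<le> H \<and> Re (h s) \<ge> 0 \<and>
           (\<forall>i. cmod (p i s) \<le> K \<and> Re (h s * (1 + p i s / s)) \<ge> e))"
proof -
  have Hh: "Hinf h" using assms(2) by (simp add: A0_def)
  obtain M where M: "\<forall>s\<in>RHP. cmod (h s) \<le> M"
    using Hh unfolding Hinf_def bounded_iff by auto
  have "bounded (\<Union>i. p i ` RHP)"
    using assms(3) by (intro bounded_UN) (auto simp: Pclass_def Hinf_def)
  then obtain K where K: "\<forall>i. \<forall>s\<in>RHP. cmod (p i s) \<le> K"
    unfolding bounded_iff by auto
  have "\<forall>i. \<exists>e>0. \<forall>s\<in>RHP. Re (h s * (1 + p i s / s)) \<ge> e"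
  proof
    fix i
    have "ESPR (\<lambda>s. h s * (1 + p i s / s))" using assms(3) by (simp add: Pclass_def)
    then obtain e where "e > 0" "PR (\<lambda>s. h s * (1 + p i s / s) - complex_of_real e)"
      by (auto simp: ESPR_def)
    then show "\<exists>e>0. \<forall>s\<in>RHP. Re (h s * (1 + p i s / s)) \<ge> e"
      by (auto simp: PR_def)
  qed
  then obtain ef where ef: "\<forall>i. ef i > 0 \<and> (\<forall>s\<in>RHP. Re (h s * (1 + p i s / s)) \<ge> ef i)"
    by metis
  define e where "e = Min (range ef)"
  have e0: "e > 0" unfolding e_def using ef by (subst Min_gr_iff) auto
  have ele: "e \<le> ef i" for i unfolding e_def by (rule Min_le) auto
  define i0 :: 'n where "i0 = undefined"
  have P0: "Pclass h (p i0)" using assms(3) by simp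
  then obtain c where c0: "c \<noteq> 0" and lim: "(p i0 \<longlongrightarrow> c) (at 0 within RHP)"
    by (auto simp: Pclass_def)
  have "A0 (\<lambda>s. h s * (1 + p i0 s / s))" using P0 by (simp add: Pclass_def ESPR_def)
  then obtain G where G: "\<forall>s\<in>RHP. cmod (h s * (1 + p i0 s / s)) \<le> G"
    unfolding A0_def Hinf_def bounded_iff by auto
  define r where "r = cmod c"
  have r0: "r > 0" using c0 by (simp add: r_def)
  have "eventually (\<lambda>s. dist (p i0 s) c < r/2) (at 0 within RHP)"
    using tendstoD[OF lim, of "r/2"] r0 by simp
  then obtain d where d0: "d > 0" and dd: "\<forall>s\<in>RHP. s \<noteq> 0 \<and> dist s 0 < d \<longrightarrow> dist (p i0 s) c < r/2"
    unfolding eventually_at by auto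
  define d' where "d' = min d (r/4)"
  have d'0: "d' > 0" using d0 r0 by (simp add: d'_def)
  define H where "H = max (4*G/r) (M/d')"
  have Hb: "cmod (h s / s) \<le> H" if s: "s \<in> RHP" for s
  proof -
    have snz: "s \<noteq> 0" using s by (auto simp: RHP_def)
    show ?thesis
    proof (cases "cmod s < d'")
      case True
      have "dist (p i0 s) c < r/2" using dd s snz True by (simp add: d'_def dist_norm)
      then have pc: "cmod (p i0 s - c) < r/2" by (simp add: dist_norm)
      have "r \<le> cmod (s + p i0 s) + cmod (p i0 s - c) + cmod s"
      proof -
        have "c = (s + p i0 s) - (p i0 s - c) - s" by simp
        then have "cmod c \<le> cmod ((s + p i0 s) - (p i0 s - c)) + cmod s"
          by (metis norm_triangle_ineq4)
        also have "\<dots> \<le> cmod (s + p i0 s) + cmod (p i0 s - c) + cmod s"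
          using norm_triangle_ineq4 by (metis add_le_cancel_right)
        finally show ?thesis by (simp add: r_def)
      qed
      moreover have "cmod s < r/4" using True by (simp add: d'_def)
      ultimately have sp: "cmod (s + p i0 s) \<ge> r/4" using pc by linarith
      have "h s * (1 + p i0 s / s) = (h s / s) * (s + p i0 s)" using snz by (simp add: field_simps)
      then have "cmod (h s / s) * cmod (s + p i0 s) \<le> G" using G s by (metis norm_mult)
      then have "cmod (h s / s) * (r/4) \<le> G"
        by (meson mult_left_mono norm_ge_zero order_trans sp)
      then have "cmod (h s / s) \<le> 4*G/r" using r0 by (simp add: field_simps)
      then show ?thesis by (simp add: H_def)
    next
      case False
      have "cmod (h s / s) = cmod (h s) / cmod s" by (simp add: norm_divide)
      also have "\<dots> \<le> M / d'"
      proof -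
        have "cmod (h s) \<le> M" using M s by auto
        moreover have "M \<ge> 0" using M s norm_ge_zero order_trans by blast
        ultimately show ?thesis using False d'0
          by (meson divide_mono not_less norm_ge_zero)
      qed
      finally show ?thesis by (simp add: H_def)
    qed
  qed
  have "\<forall>s\<in>RHP. Re (h s) \<ge> 0" using assms(1) by (simp add: PR_def)
  then show ?thesis using e0 M Hb K ef ele
    by (intro exI[of _ M] exI[of _ H] exI[of _ K] exI[of _ e]) (meson order_trans)
qed


lemma inv_props:
  fixes A :: "'a::field^'n^'n"
  assumes "invertible A"
  shows "A ** matrix_inv A = mat 1 \<and> matrix_inv A ** A = mat 1"
  using assms unfolding invertible_def matrix_inv_def by (rule someI_ex)

theorem theorem1:
  fixes h :: "complex \<Rightarrow> complex"
    and p :: "'n::finite \<Rightarrow> complex \<Rightarrow> complex"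
    and L :: "real^'n^'n"
  assumes "PR h" and "A0 h"
    and "\<forall>i. Pclass h (p i)"
    and "L \<in> Lset"
  shows "(\<forall>s\<in>RHP. invertible (retdiff L p s)) \<and> Hinf_mat (closed_loop L p)"
proof -
  obtain M H K e where e0: "e > 0" and bnds: "\<forall>s\<in>RHP. cmod (h s) \<le> M \<and> cmod (h s / s) \<le> H \<and> Re (h s) \<ge> 0 \<and>
           (\<forall>i. cmod (p i s) \<le> K \<and> Re (h s * (1 + p i s / s)) \<ge> e)"
    using const_bounds[OF assms(1,2,3)] by blast
  define C where "C = 1 + 2*(2*M + H*K + H)/e"
  have est: "norm x \<le> C * (norm a + norm b)"
    if s: "s \<in> RHP" and hyp: "\<And>i. (retdiff L p s *v x)$i = (\<Sum>j\<in>UNIV. complex_of_real (L$i$j) * a$j) / s + b$i"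
    for s x a b
  proof -
    have s0: "Re s > 0" using s by (simp add: RHP_def)
    then have snz: "s \<noteq> 0" by auto
    have eq: "x$i = b$i + (\<Sum>j\<in>UNIV. complex_of_real (L$i$j) * (a$j - p j s * x$j)) / s" for i
    proof -
      have h1: "x$i + (\<Sum>j\<in>UNIV. complex_of_real (L$i$j) * (p j s * x$j)) / s
          = (\<Sum>j\<in>UNIV. complex_of_real (L$i$j) * a$j) / s + b$i"
        using hyp[of i] by (simp add: Rv)
      have h2: "(\<Sum>j\<in>UNIV. complex_of_real (L$i$j) * (a$j - p j s * x$j))
          = (\<Sum>j\<in>UNIV. complex_of_real (L$i$j) * a$j) - (\<Sum>j\<in>UNIV. complex_of_real (L$i$j) * (p j s * x$j))"
        by (simp add: right_diff_distrib sum_subtractf)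
      have gen: "\<And>X S1 S2 B::complex. X + S1/s = S2/s + B \<Longrightarrow> X = B + (S2 - S1)/s"
      proof -
        fix X S1 S2 B :: complex assume a: "X + S1/s = S2/s + B"
        have "X = (S2/s + B) - S1/s" using a by (simp add: eq_diff_eq)
        also have "\<dots> = B + (S2 - S1)/s" by (simp add: diff_divide_distrib)
        finally show "X = B + (S2 - S1)/s" .
      qed
      show ?thesis unfolding h2 by (rule gen[OF h1])
    qed
    have b1: "cmod (h s) \<le> M" and b2: "cmod (h s / s) \<le> H" and b3: "Re (h s) \<ge> 0"
      and b4: "\<And>i. cmod (p i s) \<le> K" and b5: "\<And>i. Re (h s * (1 + p i s / s)) \<ge> e"
      using bnds s by blast+
    show ?thesis unfolding C_def
      by (rule core[OF assms(4) s0 b1 b2 b4 b5 e0 b3 eq])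
  qed
  have inv: "invertible (retdiff L p s)" if s: "s \<in> RHP" for s
  proof -
    have "\<forall>x. retdiff L p s *v x = 0 \<longrightarrow> x = 0"
    proof (intro allI impI)
      fix x assume "retdiff L p s *v x = 0"
      then have "norm x \<le> C * (norm (0::complex^'n) + norm (0::complex^'n))"
        by (intro est[OF s]) simp
      then show "x = 0" by simp
    qed
    then show ?thesis
      unfolding invertible_left_inverse matrix_left_invertible_ker[symmetric] .
  qed
  define R where "R = retdiff L p"
  define Aout :: "complex \<Rightarrow> complex^'n^('n+'n)" where
    "Aout s = (\<chi> k j. case k of Inl i \<Rightarrow> diagP p s $ i $ j | Inr i \<Rightarrow> (mat 1 :: complex^'n^'n) $ i $ j)" for s
  define Bin :: "complex \<Rightarrow> complex^('n+'n)^'n" where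
    "Bin s = (\<chi> i k. case k of Inl j \<Rightarrow> Lc_over_s L s $ i $ j | Inr j \<Rightarrow> (mat 1 :: complex^'n^'n) $ i $ j)" for s
  define colv where "colv s j = (\<chi> i. Bin s $ i $ j)" for s j
  define xv where "xv s j = matrix_inv (R s) *v colv s j" for s j
  have cl: "closed_loop L p s = Aout s ** matrix_inv (R s) ** Bin s" for s
    unfolding closed_loop_def Aout_def Bin_def R_def ..
  have entry: "closed_loop L p s $ k $ j = (\<Sum>m\<in>UNIV. Aout s $ k $ m * xv s j $ m)" for s k j
    unfolding cl matrix_mul_assoc[symmetric] xv_def colv_def
    by (simp add: matrix_matrix_mult_def matrix_vector_mult_def)
  have Rx: "R s *v xv s j = colv s j" if s: "s \<in> RHP" for s j
    using inv_props[OF inv[OF s]]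
    by (simp add: xv_def R_def matrix_vector_mul_assoc)
  have detnz: "det (R s) \<noteq> 0" if s: "s \<in> RHP" for s
    using inv[OF s] by (simp add: R_def invertible_det_nz)
  have cram: "xv s j $ m = det (\<chi> i j'. if j' = m then colv s j $ i else R s $ i $ j') / det (R s)"
    if s: "s \<in> RHP" for s j m
    using cramer[OF detnz[OF s], of "xv s j" "colv s j"] Rx[OF s] by simp
  have pholo: "\<And>j. p j holomorphic_on RHP" using assms(3) by (simp add: Pclass_def Hinf_def)
  have Aholo: "(\<lambda>s. Aout s $ k $ m) holomorphic_on RHP" for k m
  proof (cases k)
    case (Inl a)
    then show ?thesis by (cases "a = m") (simp_all add: Aout_def diagP_def pholo)
  qed (simp add: Aout_def mat_def)
  have colholo: "(\<lambda>s. colv s j $ i) holomorphic_on RHP" for j i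
    by (cases j) (auto simp: colv_def Bin_def Lc_over_s_def mat_def RHP_def intro!: holomorphic_intros)
  have Rholo: "(\<lambda>s. R s $ i $ j) holomorphic_on RHP" for i j
    unfolding R_def by (rule R_holo[OF pholo])
  have Cholo: "(\<lambda>s. (\<chi> i j'. if j' = m then colv s j $ i else R s $ i $ j') $ i $ j') holomorphic_on RHP"
    for j m i j'
    by (cases "j' = m") (simp_all add: colholo Rholo)
  have entry_bound: "cmod (closed_loop L p s $ k $ j) \<le> (K + 1) * C" if s: "s \<in> RHP" for s k j
  proof -
    obtain a b where ab: "\<And>i. colv s j $ i = (\<Sum>l\<in>UNIV. complex_of_real (L$i$l) * a$l) / s + b$i"
      and nab: "norm a + norm b = 1"
    proof (cases j)
      case (Inl j0)
      show ?thesis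
      proof (rule that[of "axis j0 1" 0])
        fix i
        have e1: "\<And>l. complex_of_real (L$i$l) * axis j0 1 $ l = (if l = j0 then complex_of_real (L$i$l) else 0)"
          by (simp add: axis_def)
        show "colv s j $ i = (\<Sum>l\<in>UNIV. complex_of_real (L$i$l) * axis j0 1 $ l) / s + 0 $ i"
          unfolding e1 by (simp add: colv_def Bin_def Inl Lc_over_s_def)
      qed (simp add: norm_axis_c)
    next
      case (Inr j0)
      show ?thesis
      proof (rule that[of 0 "axis j0 1"])
        fix i
        show "colv s j $ i = (\<Sum>l\<in>UNIV. complex_of_real (L$i$l) * (0::complex^'n) $ l) / s + axis j0 1 $ i"
          by (simp add: colv_def Bin_def Inr mat_def axis_def)
      qed (simp add: norm_axis_c)
    qed
    have nx: "norm (xv s j) \<le> C"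
      using est[OF s, of "xv s j" a b] Rx[OF s, of j] ab nab unfolding R_def by simp
    have nth_le: "cmod (xv s j $ i) \<le> norm (xv s j)" for i by (rule Finite_Cartesian_Product.norm_nth_le)
    have K0: "K \<ge> 0" using bnds s norm_ge_zero order_trans by blast
    have C0: "C \<ge> 0" using nx norm_ge_zero order_trans by blast
    show ?thesis
    proof (cases k)
      case (Inl i)
      have e1: "\<And>m. Aout s $ k $ m * xv s j $ m = (if i = m then p i s * xv s j $ i else 0)"
        by (simp add: Aout_def Inl diagP_def)
      have "cmod (closed_loop L p s $ k $ j) = cmod (p i s) * cmod (xv s j $ i)"
        unfolding entry e1 by (simp add: norm_mult)
      also have "\<dots> \<le> K * C"
        using bnds s nx nth_le K0
        by (meson mult_mono norm_ge_zero order_trans)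
      also have "\<dots> \<le> (K + 1) * C" using C0 by (simp add: algebra_simps)
      finally show ?thesis .
    next
      case (Inr i)
      have e1: "\<And>m. Aout s $ k $ m * xv s j $ m = (if i = m then xv s j $ i else 0)"
        by (simp add: Aout_def Inr mat_def)
      have "cmod (closed_loop L p s $ k $ j) = cmod (xv s j $ i)"
        unfolding entry e1 by simp
      also have "\<dots> \<le> C" using nx nth_le[of i] by linarith
      also have "\<dots> \<le> (K + 1) * C" using C0 K0 by (simp add: algebra_simps)
      finally show ?thesis .
    qed
  qed
  show ?thesis
  proof (intro conjI ballI)
    show "invertible (retdiff L p s)" if "s \<in> RHP" for s using inv that .
    show "Hinf_mat (closed_loop L p)"
      unfolding Hinf_mat_def Hinf_def
    proof (intro allI conjI)
      fix k j
      have "(\<lambda>s. \<Sum>m\<in>UNIV. Aout s $ k $ m *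
          (det (\<chi> i j'. if j' = m then colv s j $ i else R s $ i $ j') / det (R s))) holomorphic_on RHP"
        by (intro holomorphic_on_sum holomorphic_on_mult holomorphic_on_divide det_holo Aholo Cholo Rholo detnz)
      then show "(\<lambda>s. closed_loop L p s $ k $ j) holomorphic_on RHP"
        by (rule holomorphic_transform) (simp add: entry cram)
      show "bounded ((\<lambda>s. closed_loop L p s $ k $ j) ` RHP)"
        unfolding bounded_iff using entry_bound by blast
    qed
  qed
qed

end
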